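(* There exist infinitely many (combinatorially distinct) triangulations of $S^2$ which cannot be realized as the Delaunay triangulation, with respect to the cone points, of any Euclidean metric on $S^2$ with positively curved cone points.
   Context: A Euclidean metric on $S^2$ with cone points is a flat metric away from finitely many points, near each of which it is a Euclidean cone of some cone angle; a cone point is positively curved if its cone angle is less than $2\pi$. A triangulation $T$ is realized as the Delaunay triangulation with respect to the cone points if the vertex set corresponds to the set of distinguished points containing the cone points and $T$ is combinatorially equivalent to the Delaunay triangulation of the metric with respect to these points (a geodesic triangulation in which, for each edge $AB$ lying in triangles $ABC$ and $ABD$, the sum of the angles at $C$ and $D$ is at most $\pi$). *)

theory Defs
  imports Complex_Main
begin

text \<open>A (combinatorial) triangulation is given by its set of faces; each face is a
  3-element set of vertices (vertices are natural numbers).\<close>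

type_synonym triangulation = "nat set set"

definition verts :: "triangulation \<Rightarrow> nat set" where
  "verts T = \<Union>T"

definition edges :: "triangulation \<Rightarrow> nat set set" where
  "edges T = {e. card e = 2 \<and> (\<exists>F\<in>T. e \<subseteq> F)}"

definition graph_connected :: "nat set \<Rightarrow> nat set set \<Rightarrow> bool" where
  "graph_connected W E \<longleftrightarrow>
     (\<forall>x\<in>W. \<forall>y\<in>W. (\<lambda>a b. {a, b} \<in> E)\<^sup>*\<^sup>* x y)"

definition vlink :: "triangulation \<Rightarrow> nat \<Rightarrow> nat set set" where
  "vlink T v = {F - {v} | F. F \<in> T \<and> v \<in> F}"

text \<open>A triangulation of the 2-sphere: a finite pure 2-dimensional simplicial complex
  in which every edge lies in exactly two faces and every vertex link is a (connected)
  cycle, i.e. a closed combinatorial surface, which is connected and has Euler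
  characteristic 2.\<close>
definition sphere_triangulation :: "triangulation \<Rightarrow> bool" where
  "sphere_triangulation T \<longleftrightarrow>
     finite T \<and> T \<noteq> {} \<and>
     (\<forall>F\<in>T. card F = 3) \<and>
     (\<forall>e\<in>edges T. card {F\<in>T. e \<subseteq> F} = 2) \<and>
     (\<forall>v\<in>verts T. graph_connected (\<Union>(vlink T v)) (vlink T v)) \<and>
     graph_connected (verts T) (edges T) \<and>
     int (card (verts T)) - int (card (edges T)) + int (card T) = 2"

definition comb_equiv :: "triangulation \<Rightarrow> triangulation \<Rightarrow> bool" where
  "comb_equiv T T' \<longleftrightarrow>
     (\<exists>f. bij_betw f (verts T) (verts T') \<and> (\<lambda>F. f ` F) ` T = T')"

text \<open>Euclidean angle at vertex v of the Euclidean triangle F with edge lengths l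
  (law of cosines).\<close>
definition face_angle :: "(nat set \<Rightarrow> real) \<Rightarrow> nat set \<Rightarrow> nat \<Rightarrow> real" where
  "face_angle l F v =
     arccos (((\<Sum>x\<in>F - {v}. (l {v, x})\<^sup>2) - (l (F - {v}))\<^sup>2)
             / (2 * (\<Prod>x\<in>F - {v}. l {v, x})))"

definition cone_angle :: "triangulation \<Rightarrow> (nat set \<Rightarrow> real) \<Rightarrow> nat \<Rightarrow> real" where
  "cone_angle T l v = (\<Sum>F\<in>{F\<in>T. v \<in> F}. face_angle l F v)"

text \<open>T is realized as the Delaunay triangulation (w.r.t. the cone points) of a Euclidean
  cone metric on the sphere all of whose cone points are positively curved:
  there is a Euclidean cone metric with a geodesic triangulation combinatorially equal
  to T, i.e. an assignment of edge lengths making every face a non-degenerate Euclidean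
  triangle; all vertices have cone angle at most 2 pi (cone points have angle < 2 pi,
  the other distinguished points have angle 2 pi), and the Delaunay condition holds:
  for every edge, the two angles opposite to it sum to at most pi.\<close>
definition delaunay_realizable :: "triangulation \<Rightarrow> bool" where
  "delaunay_realizable T \<longleftrightarrow>
     (\<exists>l :: nat set \<Rightarrow> real.
        (\<forall>e\<in>edges T. 0 < l e) \<and>
        (\<forall>F\<in>T. \<forall>x\<in>F. l (F - {x}) < (\<Sum>y\<in>F - {x}. l {x, y})) \<and>
        (\<forall>v\<in>verts T. cone_angle T l v \<le> 2 * pi) \<and>
        (\<forall>e\<in>edges T.
           (\<Sum>F\<in>{F\<in>T. e \<subseteq> F}. \<Sum>w\<in>F - e. face_angle l F w) \<le> pi))"

end

theory Submission
  imports Defs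
begin


definition stellar :: "triangulation \<Rightarrow> nat set \<Rightarrow> nat \<Rightarrow> triangulation" where
  "stellar T F v = (T - {F}) \<union> (\<lambda>x. insert v (F - {x})) ` F"

lemma pairs_of_3:
  assumes "x \<noteq> y" "y \<noteq> z" "x \<noteq> z"
  shows "{e. card e = 2 \<and> e \<subseteq> {x,y,z}} = {{y,z},{x,z},{x,y}}"
proof -
  have "card e = 2 \<and> e \<subseteq> {x,y,z} \<longleftrightarrow> e \<in> {{y,z},{x,z},{x,y}}" for e
  proof
    assume "card e = 2 \<and> e \<subseteq> {x,y,z}"
    then obtain p q where "e = {p,q}" "p \<noteq> q" "{p,q} \<subseteq> {x,y,z}" unfolding card_2_iff by blast
    thus "e \<in> {{y,z},{x,z},{x,y}}" by auto
  next
    assume "e \<in> {{y,z},{x,z},{x,y}}"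
    thus "card e = 2 \<and> e \<subseteq> {x,y,z}" using assms by auto
  qed
  thus ?thesis by blast
qed

lemma neq_by_mem: "x \<in> B \<Longrightarrow> x \<notin> A \<Longrightarrow> A \<noteq> B" by auto

lemma edges_alt: "edges T = (\<Union>G\<in>T. {e. card e = 2 \<and> e \<subseteq> G})"
  unfolding edges_def by auto

lemma gc_complete: "(\<forall>x\<in>W. \<forall>y\<in>W. x \<noteq> y \<longrightarrow> {x,y} \<in> E) \<Longrightarrow> graph_connected W E"
  unfolding graph_connected_def
  by (metis (mono_tags, lifting) r_into_rtranclp rtranclp.rtrancl_refl)

lemma rtranclp_lift:
  assumes "r\<^sup>*\<^sup>* x y" "\<And>a b. r a b \<Longrightarrow> s\<^sup>*\<^sup>* a b"
  shows "s\<^sup>*\<^sup>* x y"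
  using assms(1)
proof (induction rule: rtranclp_induct)
  case base then show ?case by simp
next
  case (step y z) then show ?case using assms(2) by (meson rtranclp_trans)
qed

lemma gc_extend:
  assumes gc: "graph_connected W E"
    and lift: "\<And>x y. {x,y} \<in> E \<Longrightarrow> (\<lambda>a b. {a, b} \<in> E')\<^sup>*\<^sup>* x y"
    and p: "p \<in> W" and vp: "{v,p} \<in> E'"
  shows "graph_connected (insert v W) E'"
proof -
  let ?r = "\<lambda>a b. {a, b} \<in> E'"
  have W: "?r\<^sup>*\<^sup>* x y" if "x \<in> W" "y \<in> W" for x y
    using gc that unfolding graph_connected_def by (blast intro: rtranclp_lift lift)
  have "?r v p" using vp .
  moreover have "?r p v" using vp by (simp add: insert_commute)
  ultimately have v1: "?r\<^sup>*\<^sup>* v y" and v2: "?r\<^sup>*\<^sup>* y v" if "y \<in> W" for y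
    using W[OF p that] W[OF that p] by (meson converse_rtranclp_into_rtranclp rtranclp.rtrancl_into_rtrancl)+
  show ?thesis unfolding graph_connected_def
    using W v1 v2 by auto
qed

context
  fixes T :: triangulation and a b c :: nat and v :: nat
  assumes ST: "sphere_triangulation T" and FT: "{a,b,c} \<in> T" and vT: "v \<notin> verts T"
    and ab: "a \<noteq> b" and bc: "b \<noteq> c" and ac: "a \<noteq> c"
begin

lemma st_fin: "finite T" and st_c3: "\<forall>G\<in>T. card G = 3"
  and st_e2: "\<forall>e\<in>edges T. card {G\<in>T. e \<subseteq> G} = 2"
  and st_link: "\<forall>w\<in>verts T. graph_connected (\<Union>(vlink T w)) (vlink T w)"
  and st_gc: "graph_connected (verts T) (edges T)"
  and st_eu: "int (card (verts T)) - int (card (edges T)) + int (card T) = 2"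
  using ST unfolding sphere_triangulation_def by auto

lemma fin_verts: "finite (verts T)"
  unfolding verts_def using st_fin st_c3 by (metis card.infinite finite_Union zero_neq_numeral)

lemma fin_edges: "finite (edges T)"
proof -
  have "edges T \<subseteq> Pow (verts T)" unfolding edges_def verts_def by auto
  thus ?thesis using fin_verts finite_subset by blast
qed

lemma v_notin: "G \<in> T \<Longrightarrow> v \<notin> G"
  using vT unfolding verts_def by auto

lemma e_notin: "e \<in> edges T \<Longrightarrow> v \<notin> e"
  using vT unfolding verts_def edges_def by auto

lemma va: "v \<noteq> a" and vb: "v \<noteq> b" and vc: "v \<noteq> c"
  using v_notin[OF FT] by auto

lemma stellar_eq: "stellar T {a,b,c} v = (T - {{a,b,c}}) \<union> {{v,b,c},{v,a,c},{v,a,b}}"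
proof -
  have "(\<lambda>x. insert v ({a,b,c} - {x})) ` {a,b,c} = {{v,b,c},{v,a,c},{v,a,b}}"
    using ab bc ac by auto
  thus ?thesis unfolding stellar_def by simp
qed

abbreviation "T' \<equiv> stellar T {a,b,c} v"

lemma verts': "verts T' = insert v (verts T)"
  unfolding stellar_eq verts_def using FT by auto

lemma new_notin: "{{v,b,c},{v,a,c},{v,a,b}} \<inter> T = {}"
  using v_notin by auto

lemma card': "card T' = card T + 2"
proof -
  have d: "(T - {{a,b,c}}) \<inter> {{v,b,c},{v,a,c},{v,a,b}} = {}" using new_notin by auto
  have n1: "{v,b,c} \<noteq> {v,a,c}" by (rule neq_by_mem[of a]) (use ab ac va in auto)
  have n2: "{v,b,c} \<noteq> {v,a,b}" by (rule neq_by_mem[of a]) (use ab ac va in auto)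
  have n3: "{v,a,c} \<noteq> {v,a,b}" by (rule neq_by_mem[of b]) (use bc ab vb in auto)
  have c3: "card {{v,b,c},{v,a,c},{v,a,b}} = 3" using n1 n2 n3 by simp
  have "card T' = card (T - {{a,b,c}}) + 3"
    unfolding stellar_eq using card_Un_disjoint[OF _ _ d] st_fin c3 by simp
  moreover have "card (T - {{a,b,c}}) = card T - 1" using FT st_fin by simp
  moreover have "card T \<ge> 1" using FT st_fin by (metis One_nat_def card_0_eq empty_iff not_less_eq_eq le0 le_antisym)
  ultimately show ?thesis by simp
qed

definition Q :: "nat set \<Rightarrow> nat set set" where "Q G = {e. card e = 2 \<and> e \<subseteq> G}"

lemma edgesT: "edges T = (\<Union>G\<in>T-{{a,b,c}}. Q G) \<union> {{b,c},{a,c},{a,b}}"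
proof -
  have "edges T = (\<Union>G\<in>T. Q G)" unfolding edges_alt Q_def by simp
  also have "\<dots> = Q {a,b,c} \<union> (\<Union>G\<in>T-{{a,b,c}}. Q G)" by (metis FT UN_insert insert_Diff)
  finally show ?thesis unfolding Q_def pairs_of_3[OF ab bc ac] by auto
qed

lemma edgesT': "edges T' = (\<Union>G\<in>T-{{a,b,c}}. Q G) \<union> {{b,c},{a,c},{a,b}} \<union> {{v,a},{v,b},{v,c}}"
proof -
  have "edges T' = (\<Union>G\<in>T'. Q G)" unfolding edges_alt Q_def by simp
  also have "\<dots> = (\<Union>G\<in>T-{{a,b,c}}. Q G) \<union> Q {v,b,c} \<union> Q {v,a,c} \<union> Q {v,a,b}"
    unfolding stellar_eq by auto
  finally show ?thesis unfolding Q_def pairs_of_3[OF vb bc vc] pairs_of_3[OF va ac vc] pairs_of_3[OF va ab vb]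
    by (auto simp: insert_commute)
qed

lemma edges': "edges T' = edges T \<union> {{v,a},{v,b},{v,c}}"
  unfolding edgesT edgesT' by auto

lemma card_edges': "card (edges T') = card (edges T) + 3"
proof -
  have d: "edges T \<inter> {{v,a},{v,b},{v,c}} = {}" using e_notin by auto
  have n1: "{v,a} \<noteq> {v,b}" by (rule neq_by_mem[of b]) (use ab vb in auto)
  have n2: "{v,a} \<noteq> {v,c}" by (rule neq_by_mem[of c]) (use ac vc in auto)
  have n3: "{v,b} \<noteq> {v,c}" by (rule neq_by_mem[of c]) (use bc vc in auto)
  have c3: "card {{v,a},{v,b},{v,c}} = 3" using n1 n2 n3 by simp
  show ?thesis unfolding edges' using card_Un_disjoint[OF fin_edges _ d] c3 by simp
qed

lemma euler': "int (card (verts T')) - int (card (edges T')) + int (card T') = 2"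
  using st_eu card_edges' card' fin_verts vT unfolding verts' by simp

lemma e2': "\<forall>e\<in>edges T'. card {G\<in>T'. e \<subseteq> G} = 2"
proof
  fix e assume e: "e \<in> edges T'"
  let ?N = "{{v,b,c},{v,a,c},{v,a,b}}"
  show "card {G\<in>T'. e \<subseteq> G} = 2"
  proof (cases "e \<in> edges T")
    case True
    have vne: "v \<notin> e" using e_notin[OF True] .
    have ce: "card e = 2" using True unfolding edges_def by auto
    have split: "{G\<in>T'. e \<subseteq> G} = ({G\<in>T. e \<subseteq> G} - {{a,b,c}}) \<union> {H\<in>?N. e \<subseteq> H}"
      unfolding stellar_eq by auto
    have disj: "({G\<in>T. e \<subseteq> G} - {{a,b,c}}) \<inter> {H\<in>?N. e \<subseteq> H} = {}" using new_notin by auto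
    have fin1: "finite ({G\<in>T. e \<subseteq> G} - {{a,b,c}})" using st_fin by auto
    have c2: "card {G\<in>T. e \<subseteq> G} = 2" using st_e2 True by auto
    have cs: "card {G\<in>T'. e \<subseteq> G} = card ({G\<in>T. e \<subseteq> G} - {{a,b,c}}) + card {H\<in>?N. e \<subseteq> H}"
      unfolding split by (rule card_Un_disjoint[OF fin1 _ disj]) simp
    show ?thesis
    proof (cases "e \<subseteq> {a,b,c}")
      case True
      hence "e \<in> {{b,c},{a,c},{a,b}}" using ce pairs_of_3[OF ab bc ac] by blast
      hence c1: "card {H\<in>?N. e \<subseteq> H} = 1"
      proof (elim insertE emptyE)
        assume "e = {b,c}"
        hence "{H\<in>?N. e \<subseteq> H} = {{v,b,c}}" using ab bc ac va vb vc by auto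
        thus ?thesis by simp
      next
        assume "e = {a,c}"
        hence "{H\<in>?N. e \<subseteq> H} = {{v,a,c}}" using ab bc ac va vb vc by auto
        thus ?thesis by simp
      next
        assume "e = {a,b}"
        hence "{H\<in>?N. e \<subseteq> H} = {{v,a,b}}" using ab bc ac va vb vc by auto
        thus ?thesis by simp
      qed
      have "card ({G\<in>T. e \<subseteq> G} - {{a,b,c}}) = 1"
        using c2 True FT by (simp add: card_Diff_singleton_if)
      with c1 cs show ?thesis by simp
    next
      case False
      have "{H\<in>?N. e \<subseteq> H} = {}" using False vne by auto
      moreover have "{G\<in>T. e \<subseteq> G} - {{a,b,c}} = {G\<in>T. e \<subseteq> G}" using False by auto
      ultimately show ?thesis using cs c2 by simp
    qed
  next
    case False
    hence "e \<in> {{v,a},{v,b},{v,c}}" using e edges' by auto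
    thus ?thesis
    proof (elim insertE emptyE)
      assume "e = {v,a}"
      moreover have "{G\<in>T'. {v,a} \<subseteq> G} = {{v,a,b},{v,a,c}}" unfolding stellar_eq
        using v_notin ab bc ac va vb vc by auto
      moreover have "{v,a,b} \<noteq> {v,a,c}" by (rule neq_by_mem[of c]) (use ab bc ac va vb vc in auto)
      ultimately show ?thesis by simp
    next
      assume "e = {v,b}"
      moreover have "{G\<in>T'. {v,b} \<subseteq> G} = {{v,a,b},{v,b,c}}" unfolding stellar_eq
        using v_notin ab bc ac va vb vc by auto
      moreover have "{v,a,b} \<noteq> {v,b,c}" by (rule neq_by_mem[of c]) (use ab bc ac va vb vc in auto)
      ultimately show ?thesis by simp
    next
      assume "e = {v,c}"
      moreover have "{G\<in>T'. {v,c} \<subseteq> G} = {{v,a,c},{v,b,c}}" unfolding stellar_eq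
        using v_notin ab bc ac va vb vc by auto
      moreover have "{v,a,c} \<noteq> {v,b,c}" by (rule neq_by_mem[of b]) (use ab bc ac va vb vc in auto)
      ultimately show ?thesis by simp
    qed
  qed
qed

lemma gc': "graph_connected (verts T') (edges T')"
  unfolding verts'
proof (rule gc_extend[OF st_gc])
  show "a \<in> verts T" using FT unfolding verts_def by auto
  show "{v,a} \<in> edges T'" unfolding edges' by auto
  fix x y assume "{x,y} \<in> edges T"
  hence "{x,y} \<in> edges T'" unfolding edges' by auto
  thus "(\<lambda>p q. {p,q} \<in> edges T')\<^sup>*\<^sup>* x y" by (rule r_into_rtranclp)
qed

lemma link_v: "graph_connected (\<Union>(vlink T' v)) (vlink T' v)"
proof -
  have "vlink T' v = {{b,c},{a,c},{a,b}}" unfolding vlink_def stellar_eq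
    using v_notin va vb vc by auto
  thus ?thesis by (intro gc_complete) (auto simp: insert_commute)
qed

lemma link_other: "w \<in> verts T \<Longrightarrow> w \<notin> {a,b,c} \<Longrightarrow> graph_connected (\<Union>(vlink T' w)) (vlink T' w)"
proof -
  assume w: "w \<in> verts T" "w \<notin> {a,b,c}"
  have "w \<noteq> v" using w vT by auto
  hence "vlink T' w = vlink T w" unfolding vlink_def stellar_eq using w by auto
  thus ?thesis using st_link w by simp
qed

lemma link_a: "graph_connected (\<Union>(vlink T' a)) (vlink T' a)"
proof -
  have aT: "a \<in> verts T" using FT unfolding verts_def by auto
  have bc_in: "{b,c} \<in> vlink T a" unfolding vlink_def using FT ab ac
    by (intro CollectI exI[of _ "{a,b,c}"]) auto
  have vb_in: "{v,b} \<in> vlink T' a" unfolding vlink_def stellar_eq using ab va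
    by (intro CollectI exI[of _ "{v,a,b}"]) auto
  have vc_in: "{v,c} \<in> vlink T' a" unfolding vlink_def stellar_eq using ac va
    by (intro CollectI exI[of _ "{v,a,c}"]) auto
  have Ueq: "\<Union>(vlink T' a) = insert v (\<Union>(vlink T a))"
  proof
    show "\<Union>(vlink T' a) \<subseteq> insert v (\<Union>(vlink T a))"
    proof
      fix x assume "x \<in> \<Union>(vlink T' a)"
      then obtain G where G: "G \<in> T'" "a \<in> G" "x \<in> G" "x \<noteq> a" unfolding vlink_def by auto
      show "x \<in> insert v (\<Union>(vlink T a))"
      proof (cases "G \<in> T")
        case True thus ?thesis using G unfolding vlink_def by auto
      next
        case False
        hence "G \<in> {{v,b,c},{v,a,c},{v,a,b}}" using G(1) unfolding stellar_eq by auto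
        hence "x = v \<or> x = b \<or> x = c" using G by auto
        thus ?thesis using bc_in by auto
      qed
    qed
    show "insert v (\<Union>(vlink T a)) \<subseteq> \<Union>(vlink T' a)"
    proof
      fix x assume x: "x \<in> insert v (\<Union>(vlink T a))"
      show "x \<in> \<Union>(vlink T' a)"
      proof (cases "x = v \<or> x = b \<or> x = c")
        case True thus ?thesis using vb_in vc_in by auto
      next
        case False
        with x obtain G where G: "G \<in> T" "a \<in> G" "x \<in> G" "x \<noteq> a" unfolding vlink_def by auto
        have "G \<noteq> {a,b,c}" using False G by auto
        hence "G \<in> T'" using G unfolding stellar_eq by auto
        thus ?thesis using G unfolding vlink_def by auto
      qed
    qed
  qed
  show ?thesis unfolding Ueq
  proof (rule gc_extend[OF st_link[rule_format, OF aT] _ _ vb_in])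
    show "b \<in> \<Union>(vlink T a)" using bc_in by auto
    let ?r = "\<lambda>p q. {p,q} \<in> vlink T' a"
    fix x y assume xy: "{x,y} \<in> vlink T a"
    then obtain G where G: "G \<in> T" "a \<in> G" "{x,y} = G - {a}" unfolding vlink_def by auto
    show "?r\<^sup>*\<^sup>* x y"
    proof (cases "G = {a,b,c}")
      case False
      hence "{x,y} \<in> vlink T' a" using G unfolding vlink_def stellar_eq by auto
      thus ?thesis by (rule r_into_rtranclp)
    next
      case True
      hence xy2: "{x,y} = {b,c}" using G ab ac by auto
      have s1: "?r b v" "?r v b" "?r c v" "?r v c" using vb_in vc_in by (auto simp: insert_commute)
      have "?r\<^sup>*\<^sup>* b c" "?r\<^sup>*\<^sup>* c b" using s1 by (meson converse_rtranclp_into_rtranclp r_into_rtranclp)+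
      moreover have "(x = b \<and> y = c) \<or> (x = c \<and> y = b)" using xy2 bc by (auto simp: doubleton_eq_iff)
      ultimately show ?thesis by auto
    qed
  qed
qed

end

lemma stellar_sphere:
  assumes ST: "sphere_triangulation T" and FT: "F \<in> T" and vT: "v \<notin> verts T"
  shows "sphere_triangulation (stellar T F v) \<and> verts (stellar T F v) = insert v (verts T)
         \<and> card (stellar T F v) = card T + 2 \<and> edges T \<subseteq> edges (stellar T F v)"
proof -
  have "card F = 3" using ST FT unfolding sphere_triangulation_def by blast
  then obtain a b c where abc: "F = {a,b,c}" "a \<noteq> b" "b \<noteq> c" "a \<noteq> c"
    unfolding card_3_iff by blast
  have F1: "{a,b,c} \<in> T" using FT abc by simp
  have F2: "{b,a,c} \<in> T" using F1 by (simp add: insert_commute)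
  have F3: "{c,a,b} \<in> T" using F1 by (simp add: insert_commute)
  have e2: "{b,a,c} = {a,b,c}" "{c,a,b} = {a,b,c}" by (auto simp: insert_commute)
  note ctx = ST F1 vT abc(2-4)
  have V: "verts (stellar T F v) = insert v (verts T)" using verts'[OF ctx] abc by simp
  have "\<forall>w\<in>verts (stellar T F v). graph_connected (\<Union>(vlink (stellar T F v) w)) (vlink (stellar T F v) w)"
  proof
    fix w assume "w \<in> verts (stellar T F v)"
    hence w: "w = v \<or> w \<in> verts T" using V by auto
    show "graph_connected (\<Union>(vlink (stellar T F v) w)) (vlink (stellar T F v) w)"
    proof (cases "w = v")
      case True thus ?thesis using link_v[OF ctx] abc by simp
    next
      case False
      hence wT: "w \<in> verts T" using w by auto
      consider "w = a" | "w = b" | "w = c" | "w \<notin> {a,b,c}" by auto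
      thus ?thesis
      proof cases
        case 1 thus ?thesis using link_a[OF ctx] abc by simp
      next
        case 2 thus ?thesis using link_a[OF ST F2 vT] abc e2 by (simp add: eq_commute)
      next
        case 3 thus ?thesis using link_a[OF ST F3 vT] abc e2 by (simp add: eq_commute)
      next
        case 4 thus ?thesis using link_other[OF ctx wT] abc by simp
      qed
    qed
  qed
  moreover have "finite (stellar T F v)" using st_fin[OF ctx] abc unfolding stellar_def by auto
  moreover have "stellar T F v \<noteq> {}" unfolding stellar_def using abc by auto
  moreover have "\<forall>G\<in>stellar T F v. card G = 3"
    using st_c3[OF ctx] abc va[OF ctx] vb[OF ctx] vc[OF ctx] unfolding abc(1) stellar_eq[OF ctx] by auto
  ultimately show ?thesis
    unfolding sphere_triangulation_def
    using e2'[OF ctx] gc'[OF ctx] euler'[OF ctx] card'[OF ctx] edges'[OF ctx] V abc by auto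
qed



definition cover :: "nat set \<Rightarrow> nat set set \<Rightarrow> triangulation \<Rightarrow> bool" where
  "cover R S T \<longleftrightarrow> (\<forall>G\<in>T. \<forall>x\<in>G. x \<notin> R \<longrightarrow> G - {x} \<in> S)"

lemma cover_stellar:
  assumes "cover R S T" "F \<subseteq> R" "v \<notin> F" "v \<in> R \<or> (\<forall>y\<in>F. F - {y} \<in> S)"
  shows "cover R S (stellar T F v)"
  unfolding cover_def
proof (intro ballI impI)
  fix G x assume G: "G \<in> stellar T F v" and x: "x \<in> G" "x \<notin> R"
  show "G - {x} \<in> S"
  proof (cases "G \<in> T - {F}")
    case True thus ?thesis using assms(1) x G unfolding cover_def by blast
  next
    case False
    have "G \<in> (\<lambda>x. insert v (F - {x})) ` F" using G False unfolding stellar_def by blast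
    then obtain y where y: "y \<in> F" "G = insert v (F - {y})" by blast
    have "x = v" using x y assms(2) by blast
    hence "G - {x} = F - {y}" using y assms(3) by blast
    thus ?thesis using assms(4) x \<open>x = v\<close> y by metis
  qed
qed

lemma filt_insert: "{x \<in> insert a A. P x} = (if P a then insert a {x \<in> A. P x} else {x \<in> A. P x})"
  by auto

lemma filt_empty: "{x \<in> {}. P x} = {}" by auto

lemma card4: "card {w,x,y,z} \<le> 4" by (simp add: card_insert_if)

definition tet :: triangulation where "tet = {{0,1,2},{0,1,3},{0,2,3},{1,2,3}}"

lemma tet_verts: "verts tet = {0,1,2,3}" unfolding verts_def tet_def by auto

lemma tet_edges: "edges tet = {{0,1},{0,2},{0,3},{1,2},{1,3},{2,3}}"
  unfolding edges_alt tet_def by (simp add: pairs_of_3 insert_commute) 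

lemma tet_sphere: "sphere_triangulation tet"
proof -
  have c: "card tet = 4"
  proof (rule antisym)
    show "card tet \<le> 4" unfolding tet_def by (rule card4)
    have "(\<lambda>F. \<Sum>F) ` tet = {3,4,5,6}" unfolding tet_def by (simp add: eval_nat_numeral)
    hence "card ((\<lambda>F. \<Sum>F) ` tet) = 4" by simp
    thus "4 \<le> card tet" using card_image_le[of tet "\<lambda>F. \<Sum>F"] unfolding tet_def by simp
  qed
  have ce: "card (edges tet) = 6" unfolding tet_edges by (simp add: doubleton_eq_iff)
  have e2: "\<forall>e\<in>edges tet. card {F\<in>tet. e \<subseteq> F} = 2" unfolding tet_edges unfolding tet_def
    by (simp only: filt_insert filt_empty; simp; simp add: set_eq_subset)
  have tri: "{w,x,y} \<in> tet" if "w \<in> {0,1,2,3}" "x \<in> {0,1,2,3}" "y \<in> {0,1,2,3}"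
      "w \<noteq> x" "x \<noteq> y" "w \<noteq> y" for w x y :: nat
    using that by (elim insertE emptyE; simp add: tet_def insert_commute)
  have lk: "graph_connected (\<Union>(vlink tet w)) (vlink tet w)" if w: "w \<in> verts tet" for w
  proof (rule gc_complete, intro ballI impI)
    fix x y assume x: "x \<in> \<Union>(vlink tet w)" and y: "y \<in> \<Union>(vlink tet w)" and xy: "x \<noteq> y"
    have tsub: "\<forall>G\<in>tet. G \<subseteq> {0,1,2,3}" by (simp add: tet_def)
    have sub: "\<Union>(vlink tet w) \<subseteq> {0,1,2,3} - {w}"
    proof
      fix z assume "z \<in> \<Union>(vlink tet w)"
      then obtain G where "G \<in> tet" "z \<in> G" "z \<noteq> w" unfolding vlink_def by blast
      thus "z \<in> {0,1,2,3} - {w}" using tsub by blast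
    qed
    have "w \<in> {0,1,2,3}" using w tet_verts by simp
    hence "{w,x,y} \<in> tet" using x y xy sub by (intro tri) blast+
    moreover have "{x,y} = {w,x,y} - {w}" using x y sub by blast
    ultimately show "{x,y} \<in> vlink tet w" unfolding vlink_def by blast
  qed
  have gc: "graph_connected (verts tet) (edges tet)"
    unfolding tet_verts tet_edges by (rule gc_complete) (auto simp: insert_commute)
  have fin: "finite tet" "tet \<noteq> {}" "\<forall>F\<in>tet. card F = 3" unfolding tet_def by auto
  show ?thesis unfolding sphere_triangulation_def
    using fin e2 lk gc c ce tet_verts by simp
qed

primrec cone :: "triangulation \<Rightarrow> nat set list \<Rightarrow> nat \<Rightarrow> triangulation" where
  "cone T [] n = T"
| "cone T (F # L) n = cone (stellar T F n) L (Suc n)"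

lemma stellar_keep: "G \<in> T \<Longrightarrow> G \<noteq> F \<Longrightarrow> G \<in> stellar T F v"
  unfolding stellar_def by auto

lemma cone_props:
  assumes "sphere_triangulation T" "distinct L" "set L \<subseteq> T" "verts T \<subseteq> {..<n}"
    "\<forall>F\<in>set L. F \<subseteq> R \<and> (\<forall>y\<in>F. F - {y} \<in> S)" "cover R S T"
  shows "sphere_triangulation (cone T L n) \<and> card (cone T L n) = card T + 2 * length L
    \<and> verts (cone T L n) = verts T \<union> {n..<n + length L} \<and> edges T \<subseteq> edges (cone T L n)
    \<and> cover R S (cone T L n)"
  using assms
proof (induction L arbitrary: T n)
  case Nil thus ?case by simp
next
  case (Cons F L)
  have nT: "n \<notin> verts T" using Cons.prems(4) by auto
  have FT: "F \<in> T" using Cons.prems(3) by simp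
  note st = stellar_sphere[OF Cons.prems(1) FT nT]
  have FV: "F \<subseteq> verts T" using FT unfolding verts_def by auto
  have nF: "n \<notin> F" using FV nT by auto
  have cov: "cover R S (stellar T F n)"
    by (rule cover_stellar[OF Cons.prems(6)]) (use Cons.prems(5) nF in auto)
  have sub: "set L \<subseteq> stellar T F n" using Cons.prems(2,3) by (auto intro: stellar_keep)
  have vs: "verts (stellar T F n) \<subseteq> {..<Suc n}" using st Cons.prems(4) by auto
  have IH: "sphere_triangulation (cone (stellar T F n) L (Suc n)) \<and>
      card (cone (stellar T F n) L (Suc n)) = card (stellar T F n) + 2 * length L \<and>
      verts (cone (stellar T F n) L (Suc n)) = verts (stellar T F n) \<union> {Suc n..<Suc n + length L} \<and>
      edges (stellar T F n) \<subseteq> edges (cone (stellar T F n) L (Suc n)) \<and>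
      cover R S (cone (stellar T F n) L (Suc n))"
    by (rule Cons.IH) (use st Cons.prems(2,5) sub vs cov in auto)
  have "verts T \<union> {n..<n + length (F # L)} = insert n (verts T) \<union> {Suc n..<Suc n + length L}"
    by auto
  thus ?case using IH st by auto
qed

primrec stk :: "nat \<Rightarrow> triangulation" where
  "stk 0 = tet"
| "stk (Suc k) = stellar (stk k) {0,1,k+3} (k+4)"

lemma stk_props: "sphere_triangulation (stk k) \<and> verts (stk k) = {..<k+4} \<and> card (stk k) = 4 + 2*k
  \<and> {0,1,k+3} \<in> stk k"
proof (induction k)
  case 0
  have "{0,1,2,3} = {..<4::nat}" by auto
  moreover have "card tet = 4" unfolding tet_def by (simp add: set_eq_subset)
  moreover have "{0,1,3} \<in> tet" unfolding tet_def by simp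
  ultimately show ?case using tet_sphere tet_verts by simp
next
  case (Suc k)
  have v: "k + 4 \<notin> verts (stk k)" using Suc by auto
  note st = stellar_sphere[of "stk k" "{0,1,k+3}" "k+4"]
  have "insert (k+4) ({0,1,k+3} - {k+3}) \<in> stellar (stk k) {0,1,k+3} (k+4)"
    unfolding stellar_def by blast
  moreover have "insert (k+4) ({0,1,k+3} - {k+3}) = {0,1,Suc k + 3}" by auto
  ultimately have "{0,1,Suc k + 3} \<in> stk (Suc k)" by simp
  moreover have "insert (k+4) {..<k+4} = {..<Suc k + 4}" by auto
  ultimately show ?case using st Suc v by auto
qed

lemma stk_edges_mono: "edges (stk k) \<subseteq> edges (stk (k + j))"
proof (induction j)
  case 0 thus ?case by simp
next
  case (Suc j)
  have "k + j + 4 \<notin> verts (stk (k+j))" using stk_props by auto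
  hence "edges (stk (k+j)) \<subseteq> edges (stk (k + Suc j))"
    using stellar_sphere[of "stk (k+j)" "{0,1,k+j+3}" "k+j+4"] stk_props by auto
  thus ?case using Suc by auto
qed

lemma stk_persist: "G \<in> stk 5 \<Longrightarrow> G \<noteq> {0,1,8} \<Longrightarrow> G \<in> stk (5 + j)"
proof (induction j)
  case 0 thus ?case by simp
next
  case (Suc j)
  have GV: "G \<subseteq> {..<9}" using Suc.prems stk_props[of 5] unfolding verts_def by auto
  have "G \<noteq> {0,1,5+j+3}"
  proof (cases j)
    case 0 thus ?thesis using Suc.prems by simp
  next
    case (Suc i) thus ?thesis using GV by auto
  qed
  hence "G \<in> stellar (stk (5+j)) {0,1,5+j+3} (5+j+4)"
    using Suc.IH[OF Suc.prems] by (intro stellar_keep)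
  moreover have eq: "5 + Suc j = Suc (5 + j)" by simp
  ultimately show ?case by (simp only: eq stk.simps(2))
qed



lemma tri_angles:
  fixes x y z :: real
  assumes x: "0 < x" and y: "0 < y" and z: "0 < z"
    and t1: "x < y + z" and t2: "y < x + z" and t3: "z < x + y"
  shows "arccos ((y^2+z^2-x^2)/(2*y*z)) + arccos ((x^2+z^2-y^2)/(2*x*z))
          + arccos ((x^2+y^2-z^2)/(2*x*y)) = pi \<and>
         \<bar>(y^2+z^2-x^2)/(2*y*z)\<bar> < 1 \<and> \<bar>(x^2+z^2-y^2)/(2*x*z)\<bar> < 1 \<and> \<bar>(x^2+y^2-z^2)/(2*x*y)\<bar> < 1"
proof -
  define K where "K = (x+y+z)*(-x+y+z)*(x-y+z)*(x+y-z)"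
  have K: "0 < K" unfolding K_def using assms by (intro mult_pos_pos) auto
  define cA where "cA = (y^2+z^2-x^2)/(2*y*z)"
  define cB where "cB = (x^2+z^2-y^2)/(2*x*z)"
  define cC where "cC = (x^2+y^2-z^2)/(2*x*y)"
  have eA: "1 - cA^2 = K/(4*y^2*z^2)" unfolding cA_def K_def using y z
    by (simp add: field_simps power2_eq_square; (simp add: algebra_simps)?)
  have eB: "1 - cB^2 = K/(4*x^2*z^2)" unfolding cB_def K_def using x z
    by (simp add: field_simps power2_eq_square; (simp add: algebra_simps)?)
  have eC: "1 - cC^2 = K/(4*x^2*y^2)" unfolding cC_def K_def using x y
    by (simp add: field_simps power2_eq_square; (simp add: algebra_simps)?)
  have bnd: "\<bar>c\<bar> < 1" if "1 - c^2 = K / d" "0 < d" for c d :: real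
  proof -
    have "0 < 1 - c^2" using that K by simp
    hence "c^2 < 1^2" by simp
    thus ?thesis using abs_less_iff power2_less_imp_less abs_ge_zero
      by (metis abs_power2 one_less_numeral_iff power2_abs power_strict_mono zero_le_one less_le_not_le
          linorder_not_le power_mono abs_le_square_iff semiring_norm(76))
  qed
  have bA: "\<bar>cA\<bar> < 1" by (rule bnd[OF eA]) (use y z in simp)
  have bB: "\<bar>cB\<bar> < 1" by (rule bnd[OF eB]) (use x z in simp)
  have bC: "\<bar>cC\<bar> < 1" by (rule bnd[OF eC]) (use x y in simp)
  have sA: "sin (arccos cA) = sqrt K / (2*y*z)"
  proof -
    have h: "4*y^2*z^2 = (2*y*z)^2" by algebra
    have "sin (arccos cA) = sqrt (K/(2*y*z)^2)" using bA by (simp add: sin_arccos eA h del: real_sqrt_divide)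
    also have "\<dots> = sqrt K / (2*y*z)" using x y z by (simp add: real_sqrt_divide)
    finally show ?thesis .
  qed
  have sB: "sin (arccos cB) = sqrt K / (2*x*z)"
  proof -
    have h: "4*x^2*z^2 = (2*x*z)^2" by algebra
    have "sin (arccos cB) = sqrt (K/(2*x*z)^2)" using bB by (simp add: sin_arccos eB h del: real_sqrt_divide)
    also have "\<dots> = sqrt K / (2*x*z)" using x y z by (simp add: real_sqrt_divide)
    finally show ?thesis .
  qed
  have "cos (arccos cA + arccos cB) = cA*cB - sqrt K / (2*y*z) * (sqrt K / (2*x*z))"
    using bA bB by (simp add: cos_add sA sB)
  also have "\<dots> = cA*cB - K/(4*x*y*z^2)"
    using K x y z by (simp add: field_simps power2_eq_square)
  also have "\<dots> = - cC" unfolding cA_def cB_def cC_def K_def using x y z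
    by (simp add: field_simps power2_eq_square; (simp add: algebra_simps)?)
  finally have cs: "cos (arccos cA + arccos cB) = - cC" .
  have pos: "0 < cA + cB"
  proof -
    have "cA + cB = (x+y)*(z^2-(x-y)^2)/(2*x*y*z)" unfolding cA_def cB_def using x y z
      by (simp add: field_simps power2_eq_square; (simp add: algebra_simps)?)
    moreover have "0 < z^2-(x-y)^2"
    proof -
      have "\<bar>x-y\<bar> < z" using t1 t2 t3 by auto
      hence "\<bar>x-y\<bar>^2 < z^2" by (intro power_strict_mono) auto
      hence "(x-y)^2 < z^2" by simp
      thus ?thesis by simp
    qed
    ultimately show ?thesis using x y z by simp
  qed
  have "arccos cA < arccos (- cB)"
    using bA bB pos by (intro arccos_less_arccos) auto
  also have "\<dots> = pi - arccos cB" using bB by (simp add: arccos_minus)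
  finally have lt: "arccos cA + arccos cB < pi" by simp
  have ge: "0 \<le> arccos cA + arccos cB" using bA bB by (simp add: arccos_lbound)
  have "arccos cA + arccos cB = arccos (- cC)"
    using arccos_cos[OF ge] lt cs by simp
  also have "\<dots> = pi - arccos cC" using bC by (simp add: arccos_minus)
  finally show ?thesis using bA bB bC unfolding cA_def cB_def cC_def by simp
qed

lemma face_angles:
  assumes F: "card F = 3"
    and tri: "\<forall>x\<in>F. l (F - {x}) < (\<Sum>y\<in>F - {x}. l {x, y})"
  shows "(\<Sum>x\<in>F. face_angle l F x) = pi \<and> (\<forall>x\<in>F. 0 \<le> face_angle l F x)"
proof -
  obtain a b c where abc: "F = {a,b,c}" "a \<noteq> b" "b \<noteq> c" "a \<noteq> c"
    using F unfolding card_3_iff by blast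
  have Fa: "F - {a} = {b,c}" and Fb: "F - {b} = {a,c}" and Fc: "F - {c} = {a,b}"
    using abc by auto
  have ba: "{b,a} = {a,b}" and ca: "{c,a} = {a,c}" and cb: "{c,b} = {b,c}" by auto
  define x where "x = l {b,c}"
  define y where "y = l {a,c}"
  define z where "z = l {a,b}"
  have t1: "x < y + z" using tri abc Fa unfolding x_def y_def z_def by (auto simp: ac_simps)
  have t2: "y < x + z" using tri abc Fb ba cb unfolding x_def y_def z_def by (auto simp: ac_simps)
  have t3: "z < x + y" using tri abc Fc ca cb unfolding x_def y_def z_def by (auto simp: ac_simps)
  have pos: "0 < x" "0 < y" "0 < z" using t1 t2 t3 by linarith+
  have ga: "face_angle l F a = arccos ((y^2+z^2-x^2)/(2*y*z))"
    unfolding face_angle_def Fa using abc unfolding x_def y_def z_def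
    by (simp add: ac_simps)
  have gb: "face_angle l F b = arccos ((x^2+z^2-y^2)/(2*x*z))"
    unfolding face_angle_def Fb using abc unfolding x_def y_def z_def
    by (simp add: ac_simps ba cb)
  have gc: "face_angle l F c = arccos ((x^2+y^2-z^2)/(2*x*y))"
    unfolding face_angle_def Fc using abc unfolding x_def y_def z_def
    by (simp add: ac_simps ca cb)
  note TA = tri_angles[OF pos t1 t2 t3]
  have "(\<Sum>x\<in>F. face_angle l F x) = face_angle l F a + face_angle l F b + face_angle l F c"
    using abc by simp
  also have "\<dots> = pi" unfolding ga gb gc
    using TA by blast
  finally have s: "(\<Sum>x\<in>F. face_angle l F x) = pi" .
  have nn: "0 \<le> arccos t" if "\<bar>t\<bar> < 1" for t using that by (intro arccos_lbound) auto
  have "0 \<le> face_angle l F a" unfolding ga using TA by (intro nn) blast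
  moreover have "0 \<le> face_angle l F b" unfolding gb using TA by (intro nn) blast
  moreover have "0 \<le> face_angle l F c" unfolding gc using TA by (intro nn) blast
  ultimately have "\<forall>x\<in>F. 0 \<le> face_angle l F x" using abc(1) by blast
  with s show ?thesis by blast
qed

lemma obstruction:
  assumes fin: "finite T" and c3: "\<forall>F\<in>T. card F = 3"
    and cov: "\<forall>F\<in>T. \<forall>x\<in>F. x \<notin> R \<longrightarrow> F - {x} \<in> S"
    and finR: "finite R" and finS: "finite S" and Se: "S \<subseteq> edges T" and Rv: "R \<subseteq> verts T"
    and big: "card S + 2 * card R < card T"
  shows "\<not> delaunay_realizable T"
proof
  assume "delaunay_realizable T"
  then obtain l :: "nat set \<Rightarrow> real" where
    tri: "\<forall>F\<in>T. \<forall>x\<in>F. l (F - {x}) < (\<Sum>y\<in>F - {x}. l {x, y})" and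
    cone: "\<forall>v\<in>verts T. cone_angle T l v \<le> 2 * pi" and
    del: "\<forall>e\<in>edges T. (\<Sum>F\<in>{F\<in>T. e \<subseteq> F}. \<Sum>w\<in>F - e. face_angle l F w) \<le> pi"
    unfolding delaunay_realizable_def by blast
  define ang where "ang = face_angle l"
  have fa: "\<And>F. F \<in> T \<Longrightarrow> (\<Sum>x\<in>F. ang F x) = pi \<and> (\<forall>x\<in>F. 0 \<le> ang F x)"
    unfolding ang_def using face_angles c3 tri by blast
  have finF: "\<And>F. F \<in> T \<Longrightarrow> finite F" using c3 by (metis card.infinite zero_neq_numeral)
  have "pi * card T = (\<Sum>F\<in>T. \<Sum>x\<in>F. ang F x)" using fa by simp
  also have "\<dots> = (\<Sum>F\<in>T. (\<Sum>x\<in>{x. x \<in> R \<and> x \<in> F}. ang F x) + (\<Sum>x\<in>F - R. ang F x))"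
  proof (rule sum.cong)
    fix F assume F: "F \<in> T"
    have "{x. x \<in> R \<and> x \<in> F} = F \<inter> R" by auto
    thus "(\<Sum>x\<in>F. ang F x) = (\<Sum>x\<in>{x. x \<in> R \<and> x \<in> F}. ang F x) + (\<Sum>x\<in>F - R. ang F x)"
      using sum.Int_Diff[OF finF[OF F], of "ang F" R] by simp
  qed simp
  also have "\<dots> = (\<Sum>F\<in>T. \<Sum>x\<in>{x. x \<in> R \<and> x \<in> F}. ang F x) + (\<Sum>F\<in>T. \<Sum>x\<in>F - R. ang F x)"
    by (simp add: sum.distrib)
  also have "(\<Sum>F\<in>T. \<Sum>x\<in>{x. x \<in> R \<and> x \<in> F}. ang F x) = (\<Sum>v\<in>R. \<Sum>F\<in>{F. F \<in> T \<and> v \<in> F}. ang F v)"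
    by (rule sum.swap_restrict[OF fin finR])
  also have "\<dots> \<le> (\<Sum>v\<in>R. 2 * pi)"
  proof (rule sum_mono)
    fix v assume "v \<in> R"
    hence "cone_angle T l v \<le> 2 * pi" using cone Rv by auto
    thus "(\<Sum>F\<in>{F. F \<in> T \<and> v \<in> F}. ang F v) \<le> 2 * pi" unfolding cone_angle_def ang_def by simp
  qed
  also have "(\<Sum>F\<in>T. \<Sum>x\<in>F - R. ang F x) \<le> (\<Sum>e\<in>S. \<Sum>F\<in>{F\<in>T. e \<subseteq> F}. \<Sum>w\<in>F - e. ang F w)"
  proof -
    have fS: "finite (SIGMA F:T. F - R)" using fin finF by auto
    have fT: "finite (SIGMA e:S. SIGMA F:{F\<in>T. e \<subseteq> F}. F - e)" using fin finF finS
      by (intro finite_SigmaI) auto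
    have "(\<Sum>F\<in>T. \<Sum>x\<in>F - R. ang F x) = (\<Sum>(F,x)\<in>(SIGMA F:T. F - R). ang F x)"
      using fin finF by (subst sum.Sigma) auto
    also have "\<dots> \<le> (\<Sum>(e,F,w)\<in>(SIGMA e:S. SIGMA F:{F\<in>T. e \<subseteq> F}. F - e). ang F w)"
    proof (rule sum_le_included[where i = "\<lambda>(e,F,w). (F,w)"])
      show "finite (SIGMA F:T. F - R)" by fact
      show "finite (SIGMA e:S. SIGMA F:{F\<in>T. e \<subseteq> F}. F - e)" by fact
      show "\<forall>y\<in>(SIGMA e:S. SIGMA F:{F\<in>T. e \<subseteq> F}. F - e). 0 \<le> (case y of (e,F,w) \<Rightarrow> ang F w)"
        using fa by auto
      show "\<forall>x\<in>(SIGMA F:T. F - R). \<exists>y\<in>(SIGMA e:S. SIGMA F:{F\<in>T. e \<subseteq> F}. F - e).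
              (case y of (e,F,w) \<Rightarrow> (F,w)) = x \<and> (case x of (F,x) \<Rightarrow> ang F x) \<le> (case y of (e,F,w) \<Rightarrow> ang F w)"
      proof
        fix p assume "p \<in> (SIGMA F:T. F - R)"
        then obtain F x where p: "p = (F,x)" "F \<in> T" "x \<in> F" "x \<notin> R" by auto
        show "\<exists>y\<in>(SIGMA e:S. SIGMA F:{F\<in>T. e \<subseteq> F}. F - e).
              (case y of (e,F,w) \<Rightarrow> (F,w)) = p \<and> (case p of (F,x) \<Rightarrow> ang F x) \<le> (case y of (e,F,w) \<Rightarrow> ang F w)"
          by (rule bexI[where x = "(F - {x}, F, x)"]) (use p cov in auto)
      qed
    qed
    also have "\<dots> = (\<Sum>e\<in>S. \<Sum>(F,w)\<in>(SIGMA F:{F\<in>T. e \<subseteq> F}. F - e). ang F w)"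
      by (rule sum.Sigma[symmetric]) (use finS fin finF in \<open>auto intro!: finite_SigmaI\<close>)
    also have "\<dots> = (\<Sum>e\<in>S. \<Sum>F\<in>{F\<in>T. e \<subseteq> F}. \<Sum>w\<in>F - e. ang F w)"
    proof (rule sum.cong)
      fix e assume "e \<in> S"
      show "(\<Sum>(F,w)\<in>(SIGMA F:{F\<in>T. e \<subseteq> F}. F - e). ang F w) = (\<Sum>F\<in>{F\<in>T. e \<subseteq> F}. \<Sum>w\<in>F - e. ang F w)"
        by (rule sum.Sigma[symmetric]) (use fin finF in auto)
    qed simp
    finally show ?thesis .
  qed
  also have "\<dots> \<le> (\<Sum>e\<in>S. pi)"
    by (rule sum_mono) (use del Se in \<open>auto simp: ang_def\<close>)
  finally have "pi * card T \<le> 2 * pi * card R + pi * card S" by (simp add: algebra_simps)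
  hence "pi * card T \<le> pi * (2 * card R + card S)" by (simp add: algebra_simps)
  hence "real (card T) \<le> 2 * card R + card S" using pi_gt_zero by (simp only: mult_le_cancel_left_pos)
  with big show False by linarith
qed



definition L0 :: "nat set list" where
  "L0 = (SOME L. set L = stk 5 - {{0,1,8}} \<and> distinct L)"

lemma stk5: "sphere_triangulation (stk 5)" "verts (stk 5) = {..<9}" "card (stk 5) = 14" "{0,1,8} \<in> stk 5"
  using stk_props[of 5] by auto

lemma L0: "set L0 = stk 5 - {{0,1,8}}" "distinct L0"
proof -
  have "finite (stk 5 - {{0,1,8}})" using stk5(1) unfolding sphere_triangulation_def by auto
  hence "\<exists>L. set L = stk 5 - {{0,1,8}} \<and> distinct L" by (rule finite_distinct_list)
  hence "set L0 = stk 5 - {{0,1,8}} \<and> distinct L0" unfolding L0_def by (rule someI_ex)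
  thus "set L0 = stk 5 - {{0,1,8}}" "distinct L0" by auto
qed

lemma L0_len: "length L0 = 13"
proof -
  have "length L0 = card (set L0)" using L0(2) by (simp add: distinct_card)
  also have "\<dots> = 13" unfolding L0(1) using stk5 sphere_triangulation_def by (simp add: card_Diff_singleton)
  finally show ?thesis .
qed

lemma edges5: "card (edges (stk 5)) = 21"
  using stk5 unfolding sphere_triangulation_def by simp

definition Tm :: "nat \<Rightarrow> triangulation" where
  "Tm m = cone (stk (5+m)) L0 (9+m)"

lemma Tm_props: "sphere_triangulation (Tm m) \<and> card (Tm m) = 40 + 2*m \<and> verts (Tm m) = {..<22+m}
  \<and> edges (stk 5) \<subseteq> edges (Tm m) \<and> cover {..<9+m} (edges (stk 5)) (Tm m)"
proof -
  have sp: "sphere_triangulation (stk (5+m)) \<and> verts (stk (5+m)) = {..<5+m+4} \<and> card (stk (5+m)) = 4 + 2*(5+m)"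
    using stk_props[of "5+m"] by simp
  have sub: "set L0 \<subseteq> stk (5+m)" using L0(1) stk_persist by auto
  have Lok: "\<forall>F\<in>set L0. F \<subseteq> {..<9+m} \<and> (\<forall>y\<in>F. F - {y} \<in> edges (stk 5))"
  proof
    fix F assume "F \<in> set L0"
    hence F: "F \<in> stk 5" using L0(1) by auto
    have "F \<subseteq> {..<9}" using F stk5(2) unfolding verts_def by auto
    moreover have "card F = 3" using F stk5(1) unfolding sphere_triangulation_def by auto
    moreover have "F - {y} \<in> edges (stk 5)" if "y \<in> F" for y
    proof -
      have "card (F - {y}) = 2" using that \<open>card F = 3\<close> by simp
      thus ?thesis unfolding edges_def using F by blast
    qed
    ultimately show "F \<subseteq> {..<9+m} \<and> (\<forall>y\<in>F. F - {y} \<in> edges (stk 5))" by auto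
  qed
  have cov: "cover {..<9+m} (edges (stk 5)) (stk (5+m))"
    unfolding cover_def using sp unfolding verts_def by auto
  have vs: "verts (stk (5+m)) \<subseteq> {..<9+m}" using sp by auto
  note cp = cone_props[OF conjunct1[OF sp] L0(2) sub vs Lok cov]
  have "{..<5+m+4} \<union> {9+m..<9+m+13} = {..<22+m}" by auto
  moreover have "edges (stk 5) \<subseteq> edges (stk (5+m))" using stk_edges_mono by blast
  ultimately show ?thesis using cp sp L0_len unfolding Tm_def by auto
qed

theorem theorem9p1:
  shows "\<exists>\<T> :: triangulation set.
           infinite \<T> \<and>
           (\<forall>T\<in>\<T>. sphere_triangulation T \<and> \<not> delaunay_realizable T) \<and>
           (\<forall>T\<in>\<T>. \<forall>T'\<in>\<T>. T \<noteq> T' \<longrightarrow> \<not> comb_equiv T T')"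
proof (intro exI conjI)
  have cv: "card (verts (Tm m)) = 22 + m" for m using Tm_props[of m] by simp
  have inj: "inj Tm"
  proof
    fix a b assume "Tm a = Tm b"
    hence "card (verts (Tm a)) = card (verts (Tm b))" by simp
    thus "a = b" using cv by simp
  qed
  show "infinite (range Tm)" using inj finite_imageD infinite_UNIV_nat by blast
  show "\<forall>T\<in>range Tm. sphere_triangulation T \<and> \<not> delaunay_realizable T"
  proof
    fix T assume "T \<in> range Tm"
    then obtain m where T: "T = Tm m" by auto
    have P: "sphere_triangulation T" "card T = 40 + 2*m" "verts T = {..<22+m}"
      "edges (stk 5) \<subseteq> edges T" "cover {..<9+m} (edges (stk 5)) T"
      using Tm_props[of m] T by auto
    have "\<not> delaunay_realizable T"
    proof (rule obstruction)
      show "finite T" "\<forall>F\<in>T. card F = 3" using P(1) unfolding sphere_triangulation_def by auto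
      show "\<forall>F\<in>T. \<forall>x\<in>F. x \<notin> {..<9+m} \<longrightarrow> F - {x} \<in> edges (stk 5)"
        using P(5) unfolding cover_def by blast
      show "finite {..<9+m}" by simp
      show "finite (edges (stk 5))" using edges5 card.infinite by fastforce
      show "edges (stk 5) \<subseteq> edges T" by (rule P(4))
      show "{..<9+m} \<subseteq> verts T" using P(3) by auto
      show "card (edges (stk 5)) + 2 * card {..<9+m} < card T" using P(2) edges5 by simp
    qed
    thus "sphere_triangulation T \<and> \<not> delaunay_realizable T" using P(1) by simp
  qed
  show "\<forall>T\<in>range Tm. \<forall>T'\<in>range Tm. T \<noteq> T' \<longrightarrow> \<not> comb_equiv T T'"
  proof (intro ballI impI)
    fix T T' assume "T \<in> range Tm" "T' \<in> range Tm" "T \<noteq> T'"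
    then obtain a b where ab: "T = Tm a" "T' = Tm b" "a \<noteq> b" by auto
    show "\<not> comb_equiv T T'"
    proof
      assume "comb_equiv T T'"
      then obtain f where "bij_betw f (verts T) (verts T')" unfolding comb_equiv_def by blast
      hence "card (verts T) = card (verts T')" by (rule bij_betw_same_card)
      thus False using ab cv by simp
    qed
  qed
qed

end
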